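(* Let $f,g\in\mathbb{F}[Y,Z]$. If $g$ is a linear form, then $\mathrm{maxrank}(M_{fg})\le 2\cdot\mathrm{maxrank}(M_f)$.
   Context: $\mathbb{F}$ is a field, $Y=\{y_1,\dots,y_m\}$ and $Z=\{z_1,\dots,z_m\}$ are disjoint sets of variables. For $f\in\mathbb{F}[Y,Z]$, the polynomial coefficient matrix $M_f$ is the $2^m\times 2^m$ matrix with entries in $\mathbb{F}[Y,Z]$, rows indexed by monic multilinear monomials $p$ in $Y$ and columns by monic multilinear monomials $q$ in $Z$, where $M_f(p,q)=G$ if and only if $f$ can be uniquely written as $f=pq\,G+Q$ with $G$ containing no variable other than those present in $p$ and $q$, and $Q$ having no monomial which is divisible by $pq$ and contains only variables present in $p$ and $q$. For $S:Y\cup Z\to\mathbb{F}$, $M_f|_S$ is obtained by evaluating each entry at $S$, and $\mathrm{maxrank}(M_f)=\max_S\mathrm{rank}(M_f|_S)$. *)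

theory Defs
  imports "HOL-Library.Poly_Mapping" "Jordan_Normal_Form.DL_Rank"
begin

type_synonym ('v, 'a) mpoly = "('v \<Rightarrow>\<^sub>0 nat) \<Rightarrow>\<^sub>0 'a"

definition vars :: "('v, 'a::zero) mpoly \<Rightarrow> 'v set" where
  "vars p = (\<Union>\<mu>\<in>Poly_Mapping.keys p. Poly_Mapping.keys \<mu>)"

definition total_deg :: "('v \<Rightarrow>\<^sub>0 nat) \<Rightarrow> nat" where
  "total_deg \<mu> = (\<Sum>v\<in>Poly_Mapping.keys \<mu>. Poly_Mapping.lookup \<mu> v)"

definition linear_form :: "'v set \<Rightarrow> ('v, 'a::zero) mpoly \<Rightarrow> bool" where
  "linear_form X g \<longleftrightarrow> vars g \<subseteq> X \<and> (\<forall>\<mu>\<in>Poly_Mapping.keys g. total_deg \<mu> = 1)"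

definition ml_mono :: "'v set \<Rightarrow> 'v \<Rightarrow>\<^sub>0 nat" where
  "ml_mono A = (\<Sum>v\<in>A. Poly_Mapping.single v 1)"

definition ml_poly :: "'v set \<Rightarrow> ('v, 'a::{zero,one}) mpoly" where
  "ml_poly A = Poly_Mapping.single (ml_mono A) 1"

definition mdvd :: "('v \<Rightarrow>\<^sub>0 nat) \<Rightarrow> ('v \<Rightarrow>\<^sub>0 nat) \<Rightarrow> bool" where
  "mdvd \<mu> \<nu> \<longleftrightarrow> (\<forall>v. Poly_Mapping.lookup \<mu> v \<le> Poly_Mapping.lookup \<nu> v)"

text \<open>Entry M_f(p,q) for p = ml_poly P (P \<subseteq> Y), q = ml_poly Q (Q \<subseteq> Z):
  the unique G with f = p q G + R, vars G \<subseteq> P \<union> Q, and no monomial of R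
  divisible by pq containing only variables from P \<union> Q.\<close>
definition pcm_entry :: "('v, 'a::field) mpoly \<Rightarrow> 'v set \<Rightarrow> 'v set \<Rightarrow> ('v, 'a) mpoly" where
  "pcm_entry f P Q = (THE G. vars G \<subseteq> P \<union> Q \<and>
     (\<exists>R. f = ml_poly P * ml_poly Q * G + R \<and>
        (\<forall>\<mu>\<in>Poly_Mapping.keys R. \<not> (mdvd (ml_mono (P \<union> Q)) \<mu> \<and> Poly_Mapping.keys \<mu> \<subseteq> P \<union> Q))))"

definition peval :: "('v \<Rightarrow> 'a::comm_semiring_1) \<Rightarrow> ('v, 'a) mpoly \<Rightarrow> 'a" where
  "peval S p = (\<Sum>\<mu>\<in>Poly_Mapping.keys p. Poly_Mapping.lookup p \<mu> * (\<Prod>v\<in>Poly_Mapping.keys \<mu>. S v ^ Poly_Mapping.lookup \<mu> v))"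

text \<open>A fixed enumeration (without repetition) of the subsets of a finite set,
  used to index rows/columns; the rank does not depend on this choice.\<close>
definition subset_enum :: "'v set \<Rightarrow> 'v set list" where
  "subset_enum A = (SOME xs. set xs = Pow A \<and> distinct xs)"

definition pcm_eval :: "'v set \<Rightarrow> 'v set \<Rightarrow> ('v, 'a::field) mpoly \<Rightarrow> ('v \<Rightarrow> 'a) \<Rightarrow> 'a mat" where
  "pcm_eval Y Z f S = mat (length (subset_enum Y)) (length (subset_enum Z))
     (\<lambda>(i, j). peval S (pcm_entry f (subset_enum Y ! i) (subset_enum Z ! j)))"

definition mat_rank :: "'a::field mat \<Rightarrow> nat" where
  "mat_rank A = vec_space.rank (dim_row A) A"

definition maxrank :: "'v set \<Rightarrow> 'v set \<Rightarrow> ('v, 'a::field) mpoly \<Rightarrow> nat" where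
  "maxrank Y Z f = Max {mat_rank (pcm_eval Y Z f S) | S. True}"

end

theory Submission
  imports Defs
begin


context vec_space begin

lemma max_indpt_exists:
  assumes "A \<in> carrier_mat n nc"
  shows "\<exists>U. finite U \<and> maximal U (\<lambda>T. T \<subseteq> set (cols A) \<and> lin_indpt T)"
  using maximal_exists_superset[of "set (cols A)" "\<lambda>T. T \<subseteq> set (cols A) \<and> lin_indpt T" "{}"]
    finite_lin_indpt2 by auto

lemma rank_le_card_span:
  assumes A: "A \<in> carrier_mat n nc" and T: "T \<subseteq> carrier_vec n" "finite T"
    and sub: "set (cols A) \<subseteq> span T"
  shows "rank A \<le> card T"
proof -
  obtain U where U: "finite U" "maximal U (\<lambda>T. T \<subseteq> set (cols A) \<and> lin_indpt T)"
    using max_indpt_exists[OF A] by blast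
  have r: "rank A = card U" using rank_card_indpt[OF A U(2)] .
  have "U \<subseteq> set (cols A)" "lin_indpt U" using U(2) unfolding maximal_def by auto
  then have "U \<subseteq> span T" using sub by auto
  then have "card U \<le> card T"
    using replacement[OF U(1) T(2) T(1) \<open>lin_indpt U\<close>] by fastforce
  then show ?thesis using r by linarith
qed

lemma rank_basis:
  assumes A: "A \<in> carrier_mat n nc"
  shows "\<exists>T. finite T \<and> T \<subseteq> carrier_vec n \<and> card T = rank A \<and> set (cols A) \<subseteq> span T"
proof -
  obtain U where U: "finite U" "maximal U (\<lambda>T. T \<subseteq> set (cols A) \<and> lin_indpt T)"
    using max_indpt_exists[OF A] by blast
  have r: "rank A = card U" using rank_card_indpt[OF A U(2)] .
  have U2: "U \<subseteq> set (cols A)" "lin_indpt U" using U(2) unfolding maximal_def by auto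
  have cc: "set (cols A) \<subseteq> carrier_vec n" using A cols_dim by blast
  have Uc: "U \<subseteq> carrier_vec n" using U2 cc by auto
  have "set (cols A) \<subseteq> span U"
  proof
    fix s assume s: "s \<in> set (cols A)"
    show "s \<in> span U"
    proof (cases "s \<in> U")
      case True then show ?thesis using span_mem[OF Uc] by auto
    next
      case False
      show ?thesis
      proof (rule ccontr)
        assume "s \<notin> span U"
        then have "lin_indpt (U \<union> {s})"
          using lin_dep_iff_in_span[OF Uc U2(2) _ False] s cc by auto
        moreover have "U \<union> {s} \<subseteq> set (cols A)" using U2 s by auto
        ultimately have "U \<union> {s} = U" using U(2) unfolding maximal_def by blast
        then show False using False by auto
      qed
    qed
  qed
  then show ?thesis using U(1) Uc r by auto
qed

lemma rank_two_sided:
  assumes M: "M \<in> carrier_mat n nc" and C: "C \<in> carrier_mat n n" and D: "D \<in> carrier_mat nc nc"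
  shows "rank (C * M + M * D) \<le> 2 * rank M"
proof -
  obtain T where T: "finite T" "T \<subseteq> carrier_vec n" "card T = rank M" "set (cols M) \<subseteq> span T"
    using rank_basis[OF M] by blast
  obtain ts where ts: "set ts = T" "distinct ts" using T(1) finite_distinct_list by blast
  define B where "B = mat_of_cols n ts"
  have Bc: "B \<in> carrier_mat n (card T)" unfolding B_def using ts distinct_card by fastforce
  have colsB: "set (cols B) = T" unfolding B_def using ts T(2) by simp
  define T2 where "T2 = set (cols (C * B)) \<union> T"
  have CBc: "C * B \<in> carrier_mat n (card T)" using C Bc by auto
  have T2c: "T2 \<subseteq> carrier_vec n" unfolding T2_def using T(2) CBc cols_dim by blast
  have T2f: "finite T2" unfolding T2_def using T(1) by auto
  have "card T2 \<le> card (set (cols (C * B))) + card T" unfolding T2_def by (rule card_Un_le)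
  also have "card (set (cols (C * B))) \<le> card T"
    using card_length[of "cols (C * B)"] CBc by auto
  finally have cT2: "card T2 \<le> 2 * card T" by simp
  have spT2: "set (cols (C * M + M * D)) \<subseteq> span T2"
  proof
    fix c assume "c \<in> set (cols (C * M + M * D))"
    then obtain j where j: "j < nc" "c = col (C * M + M * D) j"
      using M C D by (auto simp: in_set_conv_nth)
    have cj: "c = C *\<^sub>v col M j + M *\<^sub>v col D j"
      proof -
      have "col (C * M + M * D) j = col (C * M) j + col (M * D) j"
        by (rule col_add) (use j M C D in auto)
      also have "\<dots> = C *\<^sub>v col M j + M *\<^sub>v col D j"
        using j M C D by (simp add: mult_mat_vec_def)
      finally show ?thesis using j by simp
    qed
    have "col M j \<in> span T" using T(4) j M by (auto simp: cols_def)
    then have "col M j \<in> col_space B" unfolding col_space_def colsB .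
    then obtain x where x: "x \<in> carrier_vec (card T)" "B *\<^sub>v x = col M j"
      using col_space_eq[OF Bc] Bc by auto
    have "C *\<^sub>v col M j = (C * B) *\<^sub>v x" using x C Bc by (metis assoc_mult_mat_vec)
    also have "\<dots> \<in> col_space (C * B)"
    proof -
      have d: "dim_row (C * B) = n" "dim_col (C * B) = card T" using CBc by auto
      show ?thesis unfolding col_space_eq[OF CBc] d
        using mult_mat_vec_carrier[OF CBc x(1)] x(1) by blast
    qed
    finally have 1: "C *\<^sub>v col M j \<in> span T2"
      unfolding col_space_def T2_def by (meson span_is_monotone Un_upper1 subsetD)
    have "M *\<^sub>v col D j \<in> col_space M" using col_space_eq[OF M] M D j by auto
    then have "M *\<^sub>v col D j \<in> span (span T)" unfolding col_space_def
      using span_is_monotone[OF T(4)] by auto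
    then have 2: "M *\<^sub>v col D j \<in> span T2"
      using span_span[OF T(2)] span_is_monotone[of T T2] unfolding T2_def by auto
    show "c \<in> span T2" unfolding cj using span_add1[OF T2c 1 2] by simp
  qed
  have "C * M + M * D \<in> carrier_mat n nc" using M C D by auto
  then have "rank (C * M + M * D) \<le> card T2"
    using rank_le_card_span[OF _ T2c T2f spT2] by blast
  then show ?thesis using cT2 T(3) by linarith
qed

end



lemma lookup_mult_single:
  fixes f :: "('v \<Rightarrow>\<^sub>0 nat) \<Rightarrow>\<^sub>0 'a::comm_semiring_1"
  shows "Poly_Mapping.lookup (f * Poly_Mapping.single \<mu> c) \<nu> = (if mdvd \<mu> \<nu> then Poly_Mapping.lookup f (\<nu> - \<mu>) * c else 0)"
proof -
  have inner: "(\<Sum>q. Poly_Mapping.lookup (Poly_Mapping.single \<mu> c) q when \<nu> = l + q) = (c when \<nu> = l + \<mu>)" for l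
  proof -
    have "(\<lambda>q. Poly_Mapping.lookup (Poly_Mapping.single \<mu> c) q when \<nu> = l + q) = (\<lambda>q. if q = \<mu> then (c when \<nu> = l + \<mu>) else 0)"
      by (auto simp: lookup_single when_def)
    then show ?thesis by (simp only:) (rule Sum_any.delta)
  qed
  have "Poly_Mapping.lookup (f * Poly_Mapping.single \<mu> c) \<nu> = (\<Sum>l. Poly_Mapping.lookup f l * (c when \<nu> = l + \<mu>))"
    unfolding lookup_mult inner ..
  also have "\<dots> = (if mdvd \<mu> \<nu> then Poly_Mapping.lookup f (\<nu> - \<mu>) * c else 0)"
  proof (cases "mdvd \<mu> \<nu>")
    case True
    have "\<nu> = l + \<mu> \<longleftrightarrow> l = \<nu> - \<mu>" for l
    proof
      assume "\<nu> = l + \<mu>" then show "l = \<nu> - \<mu>" by simp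
    next
      assume "l = \<nu> - \<mu>"
      then show "\<nu> = l + \<mu>" using True unfolding mdvd_def
        by (intro poly_mapping_eqI) (simp add: lookup_add lookup_minus)
    qed
    then have "(\<lambda>l. Poly_Mapping.lookup f l * (c when \<nu> = l + \<mu>)) = (\<lambda>l. if l = \<nu> - \<mu> then Poly_Mapping.lookup f (\<nu> - \<mu>) * c else 0)"
      by (auto simp: when_def)
    then show ?thesis using True by (simp only: if_True) (rule Sum_any.delta)
  next
    case False
    have "\<nu> \<noteq> l + \<mu>" for l
    proof
      assume "\<nu> = l + \<mu>"
      then have "mdvd \<mu> \<nu>" unfolding mdvd_def by (simp add: lookup_add)
      with False show False by simp
    qed
    then show ?thesis using False by simp
  qed
  finally show ?thesis .
qed

lemma lookup_ml_mono: "finite A \<Longrightarrow> Poly_Mapping.lookup (ml_mono A) v = (if v \<in> A then 1 else 0)"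
  unfolding ml_mono_def by (induction A rule: finite_induct) (auto simp: lookup_add lookup_single when_def)

lemma keys_ml_mono: "finite A \<Longrightarrow> Poly_Mapping.keys (ml_mono A) = A"
  by (auto simp: in_keys_iff lookup_ml_mono split: if_splits)

definition entA :: "('v, 'a::field) mpoly \<Rightarrow> 'v set \<Rightarrow> ('v, 'a) mpoly" where
  "entA f A = Abs_poly_mapping (\<lambda>\<nu>. if Poly_Mapping.keys \<nu> \<subseteq> A then Poly_Mapping.lookup f (\<nu> + ml_mono A) else 0)"

lemma lookup_entA: "Poly_Mapping.lookup (entA f A) \<nu> = (if Poly_Mapping.keys \<nu> \<subseteq> A then Poly_Mapping.lookup f (\<nu> + ml_mono A) else 0)"
proof -
  have "{\<nu>. (if Poly_Mapping.keys \<nu> \<subseteq> A then Poly_Mapping.lookup f (\<nu> + ml_mono A) else 0) \<noteq> 0} \<subseteq> (\<lambda>\<mu>. \<mu> - ml_mono A) ` Poly_Mapping.keys f"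
  proof
    fix \<nu> assume "\<nu> \<in> {\<nu>. (if Poly_Mapping.keys \<nu> \<subseteq> A then Poly_Mapping.lookup f (\<nu> + ml_mono A) else 0) \<noteq> 0}"
    then have "\<nu> + ml_mono A \<in> Poly_Mapping.keys f" by (auto simp: in_keys_iff split: if_splits)
    then show "\<nu> \<in> (\<lambda>\<mu>. \<mu> - ml_mono A) ` Poly_Mapping.keys f" by (intro image_eqI[of _ _ "\<nu> + ml_mono A"]) auto
  qed
  then have "finite {\<nu>. (if Poly_Mapping.keys \<nu> \<subseteq> A then Poly_Mapping.lookup f (\<nu> + ml_mono A) else 0) \<noteq> 0}"
    by (rule finite_subset) auto
  then show ?thesis unfolding entA_def by simp
qed

lemma mdvd_diff_add: "mdvd a b \<Longrightarrow> b - a + a = (b :: 'v \<Rightarrow>\<^sub>0 nat)"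
  unfolding mdvd_def by (intro poly_mapping_eqI) (simp add: lookup_add lookup_minus)

lemma keys_diff_sub: "Poly_Mapping.keys (b - a) \<subseteq> Poly_Mapping.keys (b :: 'v \<Rightarrow>\<^sub>0 nat)"
  by (auto simp: in_keys_iff lookup_minus)

lemma ml_poly_mult: "finite P \<Longrightarrow> finite Q \<Longrightarrow> P \<inter> Q = {} \<Longrightarrow>
  ml_poly P * ml_poly Q = (ml_poly (P \<union> Q) :: ('v, 'a::field) mpoly)"
  unfolding ml_poly_def ml_mono_def by (simp add: mult_single sum.union_disjoint)

lemma lookup_ml_poly_mult: "Poly_Mapping.lookup (ml_poly A * G) \<nu> =
   (if mdvd (ml_mono A) \<nu> then Poly_Mapping.lookup G (\<nu> - ml_mono A) else (0::'a::field))"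
  unfolding ml_poly_def by (subst mult.commute) (simp add: lookup_mult_single)

lemma vars_sub_iff: "vars G \<subseteq> A \<longleftrightarrow> (\<forall>\<nu>\<in>Poly_Mapping.keys G. Poly_Mapping.keys \<nu> \<subseteq> A)"
  unfolding vars_def by auto

lemma pcm_entry_eq:
  fixes f :: "('v, 'a::field) mpoly"
  assumes fin: "finite P" "finite Q" and disj: "P \<inter> Q = {}"
  shows "pcm_entry f P Q = entA f (P \<union> Q)"
proof -
  define A where "A = P \<union> Q"
  have finA: "finite A" unfolding A_def using fin by auto
  have pq: "ml_poly P * ml_poly Q = (ml_poly A :: ('v, 'a) mpoly)"
    unfolding A_def using ml_poly_mult[OF fin disj] .
  define G0 where "G0 = entA f A"
  let ?Pr = "\<lambda>G. vars G \<subseteq> P \<union> Q \<and>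
     (\<exists>R. f = ml_poly P * ml_poly Q * G + R \<and>
        (\<forall>\<mu>\<in>Poly_Mapping.keys R. \<not> (mdvd (ml_mono (P \<union> Q)) \<mu> \<and> Poly_Mapping.keys \<mu> \<subseteq> P \<union> Q)))"
  have ex: "?Pr G0"
  proof -
    have "vars G0 \<subseteq> A" unfolding vars_sub_iff
    proof
      fix \<nu> assume "\<nu> \<in> Poly_Mapping.keys G0"
      then have "Poly_Mapping.lookup G0 \<nu> \<noteq> 0" by (simp add: in_keys_iff)
      then show "Poly_Mapping.keys \<nu> \<subseteq> A" unfolding G0_def lookup_entA by (auto split: if_splits)
    qed
    moreover
    define R where "R = f - ml_poly A * G0"
    have "f = ml_poly A * G0 + R" unfolding R_def by simp
    moreover have "\<forall>\<mu>\<in>Poly_Mapping.keys R. \<not> (mdvd (ml_mono A) \<mu> \<and> Poly_Mapping.keys \<mu> \<subseteq> A)"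
    proof (intro ballI notI)
      fix \<mu> assume \<mu>: "\<mu> \<in> Poly_Mapping.keys R" and c: "mdvd (ml_mono A) \<mu> \<and> Poly_Mapping.keys \<mu> \<subseteq> A"
      have "Poly_Mapping.keys (\<mu> - ml_mono A) \<subseteq> A" using c keys_diff_sub[of \<mu> "ml_mono A"] by auto
      then have "Poly_Mapping.lookup R \<mu> = 0" unfolding R_def
        using c by (simp add: lookup_minus lookup_ml_poly_mult G0_def lookup_entA mdvd_diff_add)
      with \<mu> show False by (simp add: in_keys_iff)
    qed
    ultimately show ?thesis unfolding pq A_def[symmetric] by blast
  qed
  have uniq: "G = G0" if "?Pr G" for G
  proof -
    from that obtain R where G: "vars G \<subseteq> A" and f: "f = ml_poly A * G + R"
      and R: "\<forall>\<mu>\<in>Poly_Mapping.keys R. \<not> (mdvd (ml_mono A) \<mu> \<and> Poly_Mapping.keys \<mu> \<subseteq> A)"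
      unfolding pq A_def[symmetric] by blast
    show ?thesis
    proof (rule poly_mapping_eqI)
      fix \<nu>
      show "Poly_Mapping.lookup G \<nu> = Poly_Mapping.lookup G0 \<nu>"
      proof (cases "Poly_Mapping.keys \<nu> \<subseteq> A")
        case True
        define \<mu> where "\<mu> = \<nu> + ml_mono A"
        have md: "mdvd (ml_mono A) \<mu>" unfolding \<mu>_def mdvd_def by (simp add: lookup_add)
        have "Poly_Mapping.keys \<mu> \<subseteq> A" unfolding \<mu>_def using keys_add[of \<nu> "ml_mono A"] True keys_ml_mono[OF finA]
          by auto
        then have "Poly_Mapping.lookup R \<mu> = 0" using R md by (auto simp: in_keys_iff)
        then have "Poly_Mapping.lookup f \<mu> = Poly_Mapping.lookup G \<nu>"
          using md by (simp add: f lookup_add lookup_ml_poly_mult \<mu>_def)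
        then show ?thesis using True by (simp add: G0_def lookup_entA \<mu>_def)
      next
        case False
        then have "\<nu> \<notin> Poly_Mapping.keys G" using G unfolding vars_sub_iff by auto
        then show ?thesis using False by (simp add: G0_def lookup_entA in_keys_iff)
      qed
    qed
  qed
  have "pcm_entry f P Q = G0" unfolding pcm_entry_def
    by (rule the_equality, rule ex, erule uniq)
  then show ?thesis unfolding G0_def A_def .
qed




definition ev :: "'v \<Rightarrow> 'v \<Rightarrow>\<^sub>0 nat" where "ev v = Poly_Mapping.single v 1"

lemma lookup_ev [simp]: "Poly_Mapping.lookup (ev v) w = (if w = v then 1 else 0)"
  by (simp add: lookup_single when_def ev_def)

lemma keys_ev [simp]: "Poly_Mapping.keys (ev v) = {v}"
  by (simp add: ev_def)

lemma mdvd_ev: "mdvd (ev v) \<nu> \<longleftrightarrow> Poly_Mapping.lookup \<nu> v \<ge> 1"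
  unfolding mdvd_def lookup_ev by auto

lemma keys_sub_iff: "Poly_Mapping.keys \<nu> \<subseteq> A \<longleftrightarrow> (\<forall>w. Poly_Mapping.lookup \<nu> w \<noteq> 0 \<longrightarrow> w \<in> A)"
  by (auto simp: in_keys_iff)

lemma lookup_entA_mult_var:
  fixes f :: "('v, 'a::field) mpoly"
  assumes finA: "finite A"
  shows "Poly_Mapping.lookup (entA (f * Poly_Mapping.single (ev v) c) A) \<nu> =
    (if v \<in> A then c * (Poly_Mapping.lookup (entA f A * Poly_Mapping.single (ev v) 1) \<nu>
        + Poly_Mapping.lookup (entA f (A - {v})) \<nu>) else 0)"
proof -
  have finA': "finite (A - {v})" using finA by auto
  note lk = lookup_ml_mono[OF finA] lookup_ml_mono[OF finA'] lookup_add lookup_minus lookup_ev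
  show ?thesis
  proof (cases "v \<in> A")
    case vA: True
    show ?thesis
    proof (cases "Poly_Mapping.keys \<nu> \<subseteq> A")
      case kA: True
      have md: "mdvd (ev v) (\<nu> + ml_mono A)" unfolding mdvd_ev using vA by (simp add: lk)
      show ?thesis
      proof (cases "Poly_Mapping.lookup \<nu> v \<ge> 1")
        case True
        have e1: "\<nu> + ml_mono A - ev v = \<nu> - ev v + ml_mono A"
          by (rule poly_mapping_eqI) (use True in \<open>simp add: lk\<close>)
        have k1: "Poly_Mapping.keys (\<nu> - ev v) \<subseteq> A" using kA keys_diff_sub[of \<nu> "ev v"] by auto
        have k2: "\<not> Poly_Mapping.keys \<nu> \<subseteq> A - {v}"
        proof
          assume "Poly_Mapping.keys \<nu> \<subseteq> A - {v}"
          moreover have "v \<in> Poly_Mapping.keys \<nu>" using True by (simp add: in_keys_iff)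
          ultimately show False by blast
        qed
        show ?thesis using vA kA md True e1 k1 k2
          by (simp add: lookup_entA lookup_mult_single mdvd_ev)
      next
        case False
        have e1: "\<nu> + ml_mono A - ev v = \<nu> + ml_mono (A - {v})"
        proof (rule poly_mapping_eqI)
          fix k
          have n0: "Poly_Mapping.lookup \<nu> v = 0" using False by simp
          show "Poly_Mapping.lookup (\<nu> + ml_mono A - ev v) k = Poly_Mapping.lookup (\<nu> + ml_mono (A - {v})) k"
          proof (cases "k = v")
            case True
            then show ?thesis using n0 vA by (simp add: lookup_add lookup_minus lookup_ml_mono[OF finA] lookup_ml_mono[OF finA'])
          next
            case kv: False
            then show ?thesis by (simp add: lookup_add lookup_minus lookup_ml_mono[OF finA] lookup_ml_mono[OF finA'])
          qed
        qed
        have "v \<notin> Poly_Mapping.keys \<nu>" using False by (simp add: in_keys_iff)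
        then have k2: "Poly_Mapping.keys \<nu> \<subseteq> A - {v}" using kA by blast
        show ?thesis using vA kA md False e1 k2
          by (simp add: lookup_entA lookup_mult_single mdvd_ev)
      qed
    next
      case kA: False
      then obtain w where w0: "w \<in> Poly_Mapping.keys \<nu>" "w \<notin> A" by blast
      then have w: "Poly_Mapping.lookup \<nu> w \<noteq> 0" "w \<notin> A" by (simp_all add: in_keys_iff)
      have k1: "\<not> Poly_Mapping.keys (\<nu> - ev v) \<subseteq> A"
      proof
        assume "Poly_Mapping.keys (\<nu> - ev v) \<subseteq> A"
        moreover have "w \<noteq> v" using w vA by blast
        then have "w \<in> Poly_Mapping.keys (\<nu> - ev v)" using w by (simp add: in_keys_iff lookup_minus)
        ultimately show False using w by auto
      qed
      have k2: "\<not> Poly_Mapping.keys \<nu> \<subseteq> A - {v}" using kA by auto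
      show ?thesis using vA kA k1 k2
        by (simp add: lookup_entA lookup_mult_single)
    qed
  next
    case vA: False
    have "\<not> mdvd (ev v) (\<nu> + ml_mono A)" if "Poly_Mapping.keys \<nu> \<subseteq> A"
    proof -
      have "v \<notin> Poly_Mapping.keys \<nu>" using that vA by blast
      then have "Poly_Mapping.lookup \<nu> v = 0" by (simp add: in_keys_iff)
      then show ?thesis unfolding mdvd_ev using vA by (simp add: lk)
    qed
    then show ?thesis using vA by (simp add: lookup_entA lookup_mult_single)
  qed
qed

definition mon :: "('v \<Rightarrow> 'a::comm_semiring_1) \<Rightarrow> ('v \<Rightarrow>\<^sub>0 nat) \<Rightarrow> 'a" where
  "mon S \<mu> = (\<Prod>v\<in>Poly_Mapping.keys \<mu>. S v ^ Poly_Mapping.lookup \<mu> v)"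

lemma peval_sup: "finite K \<Longrightarrow> Poly_Mapping.keys p \<subseteq> K \<Longrightarrow>
   peval S p = (\<Sum>\<mu>\<in>K. Poly_Mapping.lookup p \<mu> * mon S \<mu>)"
  unfolding peval_def mon_def by (rule sum.mono_neutral_left) (auto simp: in_keys_iff)

lemma peval_gen:
  fixes p :: "('v, 'a::field) mpoly"
  assumes I: "finite I" and J: "finite J"
    and h: "\<And>\<nu>. Poly_Mapping.lookup p \<nu> = (\<Sum>i\<in>I. c i * Poly_Mapping.lookup (q i) \<nu>) + (\<Sum>j\<in>J. d j * Poly_Mapping.lookup (r j) \<nu>)"
  shows "peval S p = (\<Sum>i\<in>I. c i * peval S (q i)) + (\<Sum>j\<in>J. d j * peval S (r j))"
proof -
  define K where "K = Poly_Mapping.keys p \<union> (\<Union>i\<in>I. Poly_Mapping.keys (q i)) \<union> (\<Union>j\<in>J. Poly_Mapping.keys (r j))"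
  have K: "finite K" unfolding K_def using I J by auto
  have "peval S p = (\<Sum>\<mu>\<in>K. Poly_Mapping.lookup p \<mu> * mon S \<mu>)"
    by (rule peval_sup[OF K]) (auto simp: K_def)
  also have "\<dots> = (\<Sum>\<mu>\<in>K. (\<Sum>i\<in>I. c i * (Poly_Mapping.lookup (q i) \<mu> * mon S \<mu>)) + (\<Sum>j\<in>J. d j * (Poly_Mapping.lookup (r j) \<mu> * mon S \<mu>)))"
    by (simp add: h sum_distrib_right distrib_right mult.assoc)
  also have "\<dots> = (\<Sum>i\<in>I. c i * (\<Sum>\<mu>\<in>K. Poly_Mapping.lookup (q i) \<mu> * mon S \<mu>)) + (\<Sum>j\<in>J. d j * (\<Sum>\<mu>\<in>K. Poly_Mapping.lookup (r j) \<mu> * mon S \<mu>))"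
    by (simp add: sum.distrib sum_distrib_left sum.swap[of _ K])
  also have "\<dots> = (\<Sum>i\<in>I. c i * peval S (q i)) + (\<Sum>j\<in>J. d j * peval S (r j))"
  proof -
    have "peval S (q i) = (\<Sum>\<mu>\<in>K. Poly_Mapping.lookup (q i) \<mu> * mon S \<mu>)" if "i \<in> I" for i
      by (rule peval_sup[OF K]) (use that in \<open>auto simp: K_def\<close>)
    moreover have "peval S (r j) = (\<Sum>\<mu>\<in>K. Poly_Mapping.lookup (r j) \<mu> * mon S \<mu>)" if "j \<in> J" for j
      by (rule peval_sup[OF K]) (use that in \<open>auto simp: K_def\<close>)
    ultimately show ?thesis by simp
  qed
  finally show ?thesis .
qed

lemma mon_sup: "finite K \<Longrightarrow> Poly_Mapping.keys \<mu> \<subseteq> K \<Longrightarrow>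
   mon S \<mu> = (\<Prod>v\<in>K. S v ^ Poly_Mapping.lookup \<mu> v)"
  unfolding mon_def by (rule prod.mono_neutral_left) (auto simp: in_keys_iff)

lemma mon_add_ev: "mon S (\<mu> + ev v) = S v * mon S \<mu>"
proof -
  define K where "K = insert v (Poly_Mapping.keys \<mu>)"
  have K: "finite K" unfolding K_def by simp
  have "mon S (\<mu> + ev v) = (\<Prod>w\<in>K. S w ^ Poly_Mapping.lookup (\<mu> + ev v) w)"
    by (rule mon_sup[OF K]) (use keys_add[of \<mu> "ev v"] in \<open>auto simp: K_def\<close>)
  also have "\<dots> = (\<Prod>w\<in>K. S w ^ Poly_Mapping.lookup \<mu> w * (if w = v then S w else 1))"
    by (rule prod.cong) (auto simp: lookup_add lookup_ev mult.commute)
  also have "\<dots> = (\<Prod>w\<in>K. S w ^ Poly_Mapping.lookup \<mu> w) * S v"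
    by (simp add: prod.distrib K K_def prod.If_cases Int_absorb1)
  also have "(\<Prod>w\<in>K. S w ^ Poly_Mapping.lookup \<mu> w) = mon S \<mu>"
    by (rule mon_sup[OF K, symmetric]) (auto simp: K_def)
  finally show ?thesis by (simp add: mult.commute)
qed

lemma peval_mult_var:
  fixes q :: "('v, 'a::field) mpoly"
  shows "peval S (q * Poly_Mapping.single (ev v) 1) = S v * peval S q"
proof -
  define K where "K = (\<lambda>\<mu>. \<mu> + ev v) ` Poly_Mapping.keys q"
  have K: "finite K" unfolding K_def by simp
  have sub: "Poly_Mapping.keys (q * Poly_Mapping.single (ev v) 1) \<subseteq> K"
  proof
    fix \<nu> assume "\<nu> \<in> Poly_Mapping.keys (q * Poly_Mapping.single (ev v) 1)"
    then have "mdvd (ev v) \<nu>" "Poly_Mapping.lookup q (\<nu> - ev v) \<noteq> 0"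
      by (auto simp: in_keys_iff lookup_mult_single split: if_splits)
    then show "\<nu> \<in> K" unfolding K_def
      by (intro image_eqI[of _ _ "\<nu> - ev v"]) (auto simp: in_keys_iff mdvd_diff_add)
  qed
  have inj: "inj_on (\<lambda>\<mu>. \<mu> + ev v) (Poly_Mapping.keys q)" by (auto simp: inj_on_def)
  have md: "mdvd (ev v) (\<mu> + ev v)" for \<mu> :: "'v \<Rightarrow>\<^sub>0 nat"
    unfolding mdvd_def by (simp add: lookup_add)
  have "peval S (q * Poly_Mapping.single (ev v) 1) = (\<Sum>\<mu>\<in>K. Poly_Mapping.lookup (q * Poly_Mapping.single (ev v) 1) \<mu> * mon S \<mu>)"
    by (rule peval_sup[OF K sub])
  also have "\<dots> = (\<Sum>\<mu>\<in>Poly_Mapping.keys q. Poly_Mapping.lookup q \<mu> * (S v * mon S \<mu>))"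
    unfolding K_def by (subst sum.reindex[OF inj]) (simp add: lookup_mult_single md mon_add_ev)
  also have "\<dots> = S v * peval S q" unfolding peval_def mon_def by (simp add: sum_distrib_left ac_simps)
  finally show ?thesis .
qed




lemma deg1_ev:
  assumes "total_deg \<mu> = 1" shows "\<exists>v. \<mu> = ev v"
proof -
  have ne: "Poly_Mapping.keys \<mu> \<noteq> {}" using assms unfolding total_deg_def by auto
  then obtain v where v: "v \<in> Poly_Mapping.keys \<mu>" by blast
  have fin: "finite (Poly_Mapping.keys \<mu>)" by simp
  have "total_deg \<mu> = Poly_Mapping.lookup \<mu> v + (\<Sum>w\<in>Poly_Mapping.keys \<mu> - {v}. Poly_Mapping.lookup \<mu> w)"
    unfolding total_deg_def using sum.remove[OF fin v] .
  moreover have "Poly_Mapping.lookup \<mu> v \<ge> 1" using v by (simp add: in_keys_iff)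
  ultimately have 1: "Poly_Mapping.lookup \<mu> v = 1" and
    2: "(\<Sum>w\<in>Poly_Mapping.keys \<mu> - {v}. Poly_Mapping.lookup \<mu> w) = 0" using assms by linarith+
  have "Poly_Mapping.keys \<mu> - {v} = {}"
  proof (rule ccontr)
    assume "Poly_Mapping.keys \<mu> - {v} \<noteq> {}"
    then obtain w where w: "w \<in> Poly_Mapping.keys \<mu> - {v}" by blast
    then have "Poly_Mapping.lookup \<mu> w = 0" using 2 fin by simp
    with w show False by (simp add: in_keys_iff)
  qed
  then have k: "Poly_Mapping.keys \<mu> = {v}" using v by blast
  have "\<mu> = ev v"
  proof (rule poly_mapping_eqI)
    fix w show "Poly_Mapping.lookup \<mu> w = Poly_Mapping.lookup (ev v) w"
    proof (cases "w = v")
      case True then show ?thesis using 1 by simp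
    next
      case False then have "w \<notin> Poly_Mapping.keys \<mu>" using k by blast
      then show ?thesis using False by (simp add: in_keys_iff)
    qed
  qed
  then show ?thesis by blast
qed

lemma finite_vars: "finite (vars g)"
  unfolding vars_def by simp

lemma lin_decomp:
  fixes g :: "('v, 'a::field) mpoly"
  assumes "linear_form X g"
  shows "g = (\<Sum>v\<in>vars g. Poly_Mapping.single (ev v) (Poly_Mapping.lookup g (ev v)))"
proof (rule poly_mapping_eqI)
  fix \<nu>
  have evs: "\<And>\<mu>. \<mu> \<in> Poly_Mapping.keys g \<Longrightarrow> \<exists>v. \<mu> = ev v"
    using assms deg1_ev unfolding linear_form_def by blast
  have inj: "ev v = ev w \<longleftrightarrow> v = w" for v w :: 'v
    by (metis lookup_ev zero_neq_one)
  have rhs: "Poly_Mapping.lookup (\<Sum>v\<in>vars g. Poly_Mapping.single (ev v) (Poly_Mapping.lookup g (ev v))) \<nu>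
     = (\<Sum>v\<in>vars g. if ev v = \<nu> then Poly_Mapping.lookup g (ev v) else 0)"
    by (simp add: lookup_sum lookup_single when_def)
  show "Poly_Mapping.lookup g \<nu> = Poly_Mapping.lookup (\<Sum>v\<in>vars g. Poly_Mapping.single (ev v) (Poly_Mapping.lookup g (ev v))) \<nu>"
  proof (cases "\<nu> \<in> Poly_Mapping.keys g")
    case True
    then obtain w where w: "\<nu> = ev w" using evs by blast
    have wv: "w \<in> vars g" using True w unfolding vars_def by (intro UN_I[of "ev w"]) auto
    have "(\<Sum>v\<in>vars g. if ev v = \<nu> then Poly_Mapping.lookup g (ev v) else 0)
        = (\<Sum>v\<in>vars g. if v = w then Poly_Mapping.lookup g (ev w) else 0)"
      by (rule sum.cong) (auto simp: w inj)
    also have "\<dots> = Poly_Mapping.lookup g \<nu>" using wv finite_vars[of g] w by simp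
    finally show ?thesis using rhs by simp
  next
    case False
    then have "Poly_Mapping.lookup g \<nu> = 0" by (simp add: in_keys_iff)
    moreover have "(\<Sum>v\<in>vars g. if ev v = \<nu> then Poly_Mapping.lookup g (ev v) else 0) = 0"
      by (rule sum.neutral) (use \<open>Poly_Mapping.lookup g \<nu> = 0\<close> in auto)
    ultimately show ?thesis using rhs by simp
  qed
qed

lemma lookup_entA_sum:
  "Poly_Mapping.lookup (entA (\<Sum>i\<in>I. h i) A) \<nu> = (\<Sum>i\<in>I. Poly_Mapping.lookup (entA (h i) A) \<nu>)"
  by (simp add: lookup_entA lookup_sum)

lemma entry_fg:
  fixes f g :: "('v, 'a::field) mpoly"
  assumes finA: "finite A" and lf: "linear_form X g"
  defines "a \<equiv> \<lambda>v. Poly_Mapping.lookup g (ev v)"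
  shows "peval S (entA (f * g) A) =
     (\<Sum>v\<in>vars g \<inter> A. a v * S v) * peval S (entA f A) + (\<Sum>v\<in>vars g \<inter> A. a v * peval S (entA f (A - {v})))"
proof -
  define W where "W = vars g"
  have W: "finite W" unfolding W_def by (rule finite_vars)
  have fg: "f * g = (\<Sum>v\<in>W. f * Poly_Mapping.single (ev v) (a v))"
    unfolding W_def a_def by (subst lin_decomp[OF lf]) (simp add: sum_distrib_left)
  have "Poly_Mapping.lookup (entA (f * g) A) \<nu> =
      (\<Sum>v\<in>W \<inter> A. a v * Poly_Mapping.lookup (entA f A * Poly_Mapping.single (ev v) 1) \<nu>)
    + (\<Sum>v\<in>W \<inter> A. a v * Poly_Mapping.lookup (entA f (A - {v})) \<nu>)" for \<nu>
  proof -
    have "Poly_Mapping.lookup (entA (f * g) A) \<nu> = (\<Sum>v\<in>W. Poly_Mapping.lookup (entA (f * Poly_Mapping.single (ev v) (a v)) A) \<nu>)"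
      unfolding fg lookup_entA_sum ..
    also have "\<dots> = (\<Sum>v\<in>W. if v \<in> A then a v * (Poly_Mapping.lookup (entA f A * Poly_Mapping.single (ev v) 1) \<nu>
        + Poly_Mapping.lookup (entA f (A - {v})) \<nu>) else 0)"
      by (simp add: lookup_entA_mult_var[OF finA])
    also have "\<dots> = (\<Sum>v\<in>W \<inter> A. a v * (Poly_Mapping.lookup (entA f A * Poly_Mapping.single (ev v) 1) \<nu>
        + Poly_Mapping.lookup (entA f (A - {v})) \<nu>))"
      by (simp add: sum.inter_restrict[OF W])
    finally show ?thesis by (simp add: distrib_left sum.distrib)
  qed
  then have "peval S (entA (f * g) A) =
      (\<Sum>v\<in>W \<inter> A. a v * peval S (entA f A * Poly_Mapping.single (ev v) 1))
    + (\<Sum>v\<in>W \<inter> A. a v * peval S (entA f (A - {v})))"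
    by (intro peval_gen) (use W in auto)
  also have "\<dots> = (\<Sum>v\<in>W \<inter> A. a v * S v) * peval S (entA f A) + (\<Sum>v\<in>W \<inter> A. a v * peval S (entA f (A - {v})))"
    by (simp add: peval_mult_var sum_distrib_right mult.assoc)
  finally show ?thesis unfolding W_def .
qed




lemma subset_enum_props: "finite A \<Longrightarrow> set (subset_enum A) = Pow A \<and> distinct (subset_enum A)"
  unfolding subset_enum_def by (rule someI_ex) (simp add: finite_distinct_list)

lemma sum_nth_delta:
  assumes "distinct xs" "X \<in> set xs"
  shows "(\<Sum>k<length xs. (if xs ! k = X then 1 else 0) * h (xs ! k)) = (h X :: 'a::comm_ring_1)"
proof -
  obtain k0 where k0: "k0 < length xs" "xs ! k0 = X" using assms(2) by (auto simp: in_set_conv_nth)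
  have "(\<Sum>k<length xs. (if xs ! k = X then 1 else 0) * h (xs ! k)) = (\<Sum>k<length xs. if k = k0 then h X else 0)"
    by (rule sum.cong) (use k0 assms(1) nth_eq_iff_index_eq in auto)
  also have "\<dots> = h X" using k0 by simp
  finally show ?thesis .
qed

lemma sum_if_mult:
  fixes n i :: nat
  assumes "i < n" shows "(\<Sum>k<n. (if k = i then c else 0) * h k) = (c * h i :: 'a::comm_ring_1)"
proof -
  have "(\<Sum>k<n. (if k = i then c else 0) * h k) = (\<Sum>k<n. if k = i then c * h k else 0)"
    by (rule sum.cong) auto
  also have "\<dots> = (if i \<in> {..<n} then c * h i else 0)"
    by (rule sum.delta) simp
  finally show ?thesis using assms by simp
qed

lemma rank_step:
  fixes f g :: "('v, 'a::field) mpoly"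
  assumes finY: "finite Y" and finZ: "finite Z" and disj: "Y \<inter> Z = {}"
    and lf: "linear_form (Y \<union> Z) g"
  shows "mat_rank (pcm_eval Y Z (f * g) S) \<le> 2 * mat_rank (pcm_eval Y Z f S)"
proof -
  define Ps where "Ps = subset_enum Y"
  define Qs where "Qs = subset_enum Z"
  have Ps: "set Ps = Pow Y" "distinct Ps" using subset_enum_props[OF finY] unfolding Ps_def by auto
  have Qs: "set Qs = Pow Z" "distinct Qs" using subset_enum_props[OF finZ] unfolding Qs_def by auto
  define n1 where "n1 = length Ps"
  define n2 where "n2 = length Qs"
  define W where "W = vars g"
  define a where "a = (\<lambda>v. Poly_Mapping.lookup g (ev v))"
  define E where "E = (\<lambda>P Q. peval S (entA f (P \<union> Q)))"
  define M where "M = pcm_eval Y Z f S"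
  define N where "N = pcm_eval Y Z (f * g) S"
  have Pi: "Ps ! i \<subseteq> Y" "finite (Ps ! i)" if "i < n1" for i
    using that Ps finY unfolding n1_def by (auto intro: finite_subset dest!: nth_mem)
  have Qj: "Qs ! j \<subseteq> Z" "finite (Qs ! j)" if "j < n2" for j
    using that Qs finZ unfolding n2_def by (auto intro: finite_subset dest!: nth_mem)
  have dPQ: "Ps ! i \<inter> Qs ! j = {}" if "i < n1" "j < n2" for i j using Pi[OF that(1)] Qj[OF that(2)] disj by blast
  have Mc: "M \<in> carrier_mat n1 n2" unfolding M_def pcm_eval_def n1_def n2_def Ps_def Qs_def by simp
  have Nc: "N \<in> carrier_mat n1 n2" unfolding N_def pcm_eval_def n1_def n2_def Ps_def Qs_def by simp
  have Me: "M $$ (i, j) = E (Ps ! i) (Qs ! j)" if "i < n1" "j < n2" for i j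
    using that pcm_entry_eq[OF Pi(2)[OF that(1)] Qj(2)[OF that(2)] dPQ[OF that], where f=f]
    unfolding M_def pcm_eval_def E_def n1_def n2_def Ps_def Qs_def by simp
  have Ne: "N $$ (i, j) = peval S (entA (f * g) (Ps ! i \<union> Qs ! j))" if "i < n1" "j < n2" for i j
    using that pcm_entry_eq[OF Pi(2)[OF that(1)] Qj(2)[OF that(2)] dPQ[OF that], where f="f * g"]
    unfolding N_def pcm_eval_def n1_def n2_def Ps_def Qs_def by simp
  define C where "C = mat n1 n1 (\<lambda>(i, k). (if k = i then (\<Sum>v\<in>W \<inter> Ps ! i. a v * S v) else 0)
      + (\<Sum>v\<in>W \<inter> Ps ! i. a v * (if Ps ! k = Ps ! i - {v} then 1 else 0)))"
  define D where "D = mat n2 n2 (\<lambda>(k, j). (if k = j then (\<Sum>v\<in>W \<inter> Qs ! j. a v * S v) else 0)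
      + (\<Sum>v\<in>W \<inter> Qs ! j. a v * (if Qs ! k = Qs ! j - {v} then 1 else 0)))"
  have Cc: "C \<in> carrier_mat n1 n1" unfolding C_def by simp
  have Dc: "D \<in> carrier_mat n2 n2" unfolding D_def by simp
  have finW: "finite W" unfolding W_def by (rule finite_vars)
  have "N = C * M + M * D"
  proof (rule eq_matI)
    show "dim_row N = dim_row (C * M + M * D)" "dim_col N = dim_col (C * M + M * D)"
      using Nc Cc Mc Dc by auto
    fix i j assume ij: "i < dim_row (C * M + M * D)" "j < dim_col (C * M + M * D)"
    then have i: "i < n1" and j: "j < n2" using Cc Mc Dc by auto
    define P where "P = Ps ! i"
    define Q where "Q = Qs ! j"
    have CM: "(C * M) $$ (i, j) = (\<Sum>v\<in>W \<inter> P. a v * S v) * E P Q + (\<Sum>v\<in>W \<inter> P. a v * E (P - {v}) Q)"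
    proof -
      have "(C * M) $$ (i, j) = (\<Sum>k<n1. C $$ (i, k) * M $$ (k, j))"
        using i j Cc Mc by (simp add: scalar_prod_def atLeast0LessThan)
      also have "\<dots> = (\<Sum>k<n1. (if k = i then (\<Sum>v\<in>W \<inter> P. a v * S v) else 0) * E (Ps ! k) Q
            + (\<Sum>v\<in>W \<inter> P. a v * ((if Ps ! k = P - {v} then 1 else 0) * E (Ps ! k) Q)))"
        by (rule sum.cong) (auto simp: C_def Me j P_def Q_def i sum_distrib_right distrib_right mult.assoc)
      also have "\<dots> = (\<Sum>v\<in>W \<inter> P. a v * S v) * E P Q
            + (\<Sum>v\<in>W \<inter> P. a v * (\<Sum>k<n1. (if Ps ! k = P - {v} then 1 else 0) * E (Ps ! k) Q))"
        unfolding sum.distrib sum_if_mult[OF i] sum_distrib_left P_def by (simp only: sum.swap[of _ "{..<n1}"])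
      also have "(\<Sum>v\<in>W \<inter> P. a v * (\<Sum>k<n1. (if Ps ! k = P - {v} then 1 else 0) * E (Ps ! k) Q))
          = (\<Sum>v\<in>W \<inter> P. a v * E (P - {v}) Q)"
      proof (rule sum.cong[OF refl])
        fix v assume "v \<in> W \<inter> P"
        have "P - {v} \<in> set Ps" using Pi[OF i] Ps unfolding P_def by auto
        then show "a v * (\<Sum>k<n1. (if Ps ! k = P - {v} then 1 else 0) * E (Ps ! k) Q) = a v * E (P - {v}) Q"
          using sum_nth_delta[OF Ps(2), of "P - {v}" "\<lambda>X. E X Q"] unfolding n1_def by simp
      qed
      finally show ?thesis .
    qed
    have MD: "(M * D) $$ (i, j) = (\<Sum>v\<in>W \<inter> Q. a v * S v) * E P Q + (\<Sum>v\<in>W \<inter> Q. a v * E P (Q - {v}))"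
    proof -
      have "(M * D) $$ (i, j) = (\<Sum>k<n2. M $$ (i, k) * D $$ (k, j))"
        using i j Dc Mc by (simp add: scalar_prod_def atLeast0LessThan)
      also have "\<dots> = (\<Sum>k<n2. (if k = j then (\<Sum>v\<in>W \<inter> Q. a v * S v) else 0) * E P (Qs ! k)
            + (\<Sum>v\<in>W \<inter> Q. a v * ((if Qs ! k = Q - {v} then 1 else 0) * E P (Qs ! k))))"
        by (rule sum.cong) (auto simp: D_def Me i P_def Q_def j sum_distrib_left distrib_left ac_simps)
      also have "\<dots> = (\<Sum>v\<in>W \<inter> Q. a v * S v) * E P Q
            + (\<Sum>v\<in>W \<inter> Q. a v * (\<Sum>k<n2. (if Qs ! k = Q - {v} then 1 else 0) * E P (Qs ! k)))"
        unfolding sum.distrib sum.swap[of _ "W \<inter> Q"] sum_distrib_left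
        by (simp add: sum_if_mult[OF j] Q_def)
      also have "(\<Sum>v\<in>W \<inter> Q. a v * (\<Sum>k<n2. (if Qs ! k = Q - {v} then 1 else 0) * E P (Qs ! k)))
          = (\<Sum>v\<in>W \<inter> Q. a v * E P (Q - {v}))"
      proof (rule sum.cong[OF refl])
        fix v assume "v \<in> W \<inter> Q"
        have "Q - {v} \<in> set Qs" using Qj[OF j] Qs unfolding Q_def by auto
        then show "a v * (\<Sum>k<n2. (if Qs ! k = Q - {v} then 1 else 0) * E P (Qs ! k)) = a v * E P (Q - {v})"
          using sum_nth_delta[OF Qs(2), of "Q - {v}" "\<lambda>X. E P X"] unfolding n2_def by simp
      qed
      finally show ?thesis .
    qed
    have finPQ: "finite (P \<union> Q)" using Pi[OF i] Qj[OF j] unfolding P_def Q_def by auto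
    have dj: "P \<inter> Q = {}" using dPQ[OF i j] unfolding P_def Q_def .
    have WPQ: "W \<inter> (P \<union> Q) = (W \<inter> P) \<union> (W \<inter> Q)" "(W \<inter> P) \<inter> (W \<inter> Q) = {}" using dj by auto
    have fins: "finite (W \<inter> P)" "finite (W \<inter> Q)" using finW by auto
    have "N $$ (i, j) = (\<Sum>v\<in>W \<inter> (P \<union> Q). a v * S v) * E P Q + (\<Sum>v\<in>W \<inter> (P \<union> Q). a v * peval S (entA f (P \<union> Q - {v})))"
      using Ne[OF i j] entry_fg[OF finPQ lf, where f=f and S=S] unfolding W_def a_def E_def P_def Q_def by simp
    also have "(\<Sum>v\<in>W \<inter> (P \<union> Q). a v * peval S (entA f (P \<union> Q - {v})))
       = (\<Sum>v\<in>W \<inter> P. a v * E (P - {v}) Q) + (\<Sum>v\<in>W \<inter> Q. a v * E P (Q - {v}))"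
    proof -
      have "(\<Sum>v\<in>W \<inter> (P \<union> Q). a v * peval S (entA f (P \<union> Q - {v})))
          = (\<Sum>v\<in>W \<inter> P. a v * peval S (entA f (P \<union> Q - {v}))) + (\<Sum>v\<in>W \<inter> Q. a v * peval S (entA f (P \<union> Q - {v})))"
        unfolding WPQ(1) by (rule sum.union_disjoint[OF fins WPQ(2)])
      moreover have "(\<Sum>v\<in>W \<inter> P. a v * peval S (entA f (P \<union> Q - {v}))) = (\<Sum>v\<in>W \<inter> P. a v * E (P - {v}) Q)"
      proof (rule sum.cong[OF refl])
        fix v assume "v \<in> W \<inter> P"
        then have "P \<union> Q - {v} = (P - {v}) \<union> Q" using dj by auto
        then show "a v * peval S (entA f (P \<union> Q - {v})) = a v * E (P - {v}) Q" unfolding E_def by simp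
      qed
      moreover have "(\<Sum>v\<in>W \<inter> Q. a v * peval S (entA f (P \<union> Q - {v}))) = (\<Sum>v\<in>W \<inter> Q. a v * E P (Q - {v}))"
      proof (rule sum.cong[OF refl])
        fix v assume "v \<in> W \<inter> Q"
        then have "P \<union> Q - {v} = P \<union> (Q - {v})" using dj by auto
        then show "a v * peval S (entA f (P \<union> Q - {v})) = a v * E P (Q - {v})" unfolding E_def by simp
      qed
      ultimately show ?thesis by simp
    qed
    also have "(\<Sum>v\<in>W \<inter> (P \<union> Q). a v * S v) = (\<Sum>v\<in>W \<inter> P. a v * S v) + (\<Sum>v\<in>W \<inter> Q. a v * S v)"
      unfolding WPQ(1) by (rule sum.union_disjoint[OF fins WPQ(2)])
    finally have "N $$ (i, j) = (C * M) $$ (i, j) + (M * D) $$ (i, j)"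
      unfolding CM MD by (simp add: algebra_simps)
    then show "N $$ (i, j) = (C * M + M * D) $$ (i, j)"
      using i j Cc Mc Dc by simp
  qed
  then have "vec_space.rank n1 N \<le> 2 * vec_space.rank n1 M"
    using vec_space.rank_two_sided[OF Mc Cc Dc] by simp
  then show ?thesis unfolding mat_rank_def N_def[symmetric] M_def[symmetric] using Mc Nc by simp
qed

lemma mat_rank_le: "mat_rank A \<le> dim_col A"
  unfolding mat_rank_def by (rule vec_space.rank_le_nc[OF carrier_matI]) (rule refl)+

lemma ranks_finite: "finite {mat_rank (pcm_eval Y Z h S) | S. True}"
proof (rule finite_subset)
  show "{mat_rank (pcm_eval Y Z h S) | S. True} \<subseteq> {..length (subset_enum Z)}"
  proof
    fix r assume "r \<in> {mat_rank (pcm_eval Y Z h S) | S. True}"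
    then obtain S where "r = mat_rank (pcm_eval Y Z h S)" by blast
    then have "r \<le> dim_col (pcm_eval Y Z h S)" using mat_rank_le by simp
    then show "r \<in> {..length (subset_enum Z)}" by (simp add: pcm_eval_def)
  qed
qed simp

theorem corollary1:
  fixes Y Z :: "'v set" and f g :: "('v, 'a::field) mpoly" and m :: nat
  assumes "finite Y" and "finite Z" and "Y \<inter> Z = {}"
    and "card Y = m" and "card Z = m"
    and "vars f \<subseteq> Y \<union> Z" and "vars g \<subseteq> Y \<union> Z"
    and "linear_form (Y \<union> Z) g"
  shows "maxrank Y Z (f * g) \<le> 2 * maxrank Y Z f"
  unfolding maxrank_def
proof (rule Max.boundedI[OF ranks_finite])
  show "{mat_rank (pcm_eval Y Z (f * g) S) |S. True} \<noteq> {}" by auto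
next
  fix r assume "r \<in> {mat_rank (pcm_eval Y Z (f * g) S) |S. True}"
  then obtain S where r: "r = mat_rank (pcm_eval Y Z (f * g) S)" by blast
  have 1: "r \<le> 2 * mat_rank (pcm_eval Y Z f S)"
    unfolding r by (rule rank_step[OF assms(1,2,3,8)])
  have 2: "mat_rank (pcm_eval Y Z f S) \<le> Max {mat_rank (pcm_eval Y Z f S) |S. True}"
    by (rule Max_ge[OF ranks_finite]) auto
  from 1 2 show "r \<le> 2 * Max {mat_rank (pcm_eval Y Z f S) |S. True}" by linarith
qed


end
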